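(* Let $\sigma^2>0$ (with $\sigma>0$), let $P_X$ be a distribution on $\mathbb{R}^d$, let $\phi^r:\mathbb{R}^d\to\mathbb{R}^r$ be a feature map, let $L\in\mathbb{R}^{r\times r}$ be a fixed matrix and $\phi^L(x):=L^\top\phi^r(x)$. Assume $\|\phi^L(x)\|_2\le K$ for all $x$ (training and test points) and that $\Sigma:=\mathbb{E}_{x\sim P_X}[\phi^L(x)\phi^L(x)^\top]$ satisfies $\lambda_{\min}(\Sigma)>0$. Let $\delta>0$ and $N\ge k\ge\frac83\log\left(\frac{4r}{\delta}\right)\left(\frac{4K^2}{\lambda_{\min}(\Sigma)}\right)^2$. Let $\mathbf{x}_1,\ldots,\mathbf{x}_N\sim P_X$ be i.i.d. and $s_1,\ldots,s_k\in\{1,\ldots,N\}$ drawn uniformly without replacement; define $\hat\Sigma_N:=\frac1N\sum_{i=1}^N\phi^L(\mathbf{x}_i)\phi^L(\mathbf{x}_i)^\top$ and $\hat\Sigma_k:=\frac1k\sum_{i=1}^k\phi^L(\mathbf{x}_{s_i})\phi^L(\mathbf{x}_{s_i})^\top$. For test points $\mathbf{x}'_1,\ldots,\mathbf{x}'_{N'}$ let $\Phi^L_{\mathbf{x}'}$ have rows $\phi^L(\mathbf{x}'_i)^\top$ and define $$S^B_{\mathbf{x}',\mathbf{x}'}:=\Phi^L_{\mathbf{x}'}\Big(\tfrac{1}{\sigma^2}N\hat\Sigma_N+I_r\Big)^{-1}\Phi^{L\top}_{\mathbf{x}'},\qquad S^{B,k}_{\mathbf{x}',\mathbf{x}'}:=\Phi^L_{\mathbf{x}'}\Big(\tfrac{1}{\sigma^2}N\hat\Sigma_k+I_r\Big)^{-1}\Phi^{L\top}_{\mathbf{x}'}.$$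 Then with probability at least $1-\delta$, for any $N'$ test points $\mathbf{x}'_1,\ldots,\mathbf{x}'_{N'}$, $$\big\|S^{B,k}_{\mathbf{x}',\mathbf{x}'}-S^B_{\mathbf{x}',\mathbf{x}'}\big\|_2\le N'\,\frac{4K^4}{\left(\sigma/N+\sigma^{-1}\lambda_{\min}(\Sigma)/2\right)^2}\,\frac1N\sqrt{\frac{8}{3k}\log(4r/\delta)}.$$
   Context: $\|\cdot\|_2$ is the spectral norm and $\lambda_{\min}$ the smallest eigenvalue. $S^B$ is the full-data predictive covariance with features $\phi^L$ and noise variance $\sigma^2$; $S^{B,k}$ is its subsampled approximation. *)

theory Defs
  imports "HOL-Probability.Probability"
begin

definition outer :: "real^'r \<Rightarrow> real^'r^'r" where
  "outer v = (\<chi> i j. v$i * v$j)"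

text \<open>Real eigenvalues of a square real matrix, and the smallest one
  (used for symmetric matrices, whose eigenvalues are all real).\<close>
definition eigenvalues :: "real^'n^'n \<Rightarrow> real set" where
  "eigenvalues A = {c. \<exists>v. v \<noteq> 0 \<and> A *v v = c *\<^sub>R v}"

definition lambda_min :: "real^'n^'n \<Rightarrow> real" where
  "lambda_min A = Min (eigenvalues A)"

definition spec_norm :: "nat \<Rightarrow> (nat \<Rightarrow> nat \<Rightarrow> real) \<Rightarrow> real" where
  "spec_norm n S = (SUP v \<in> {v :: nat \<Rightarrow> real. (\<Sum>j<n. (v j)\<^sup>2) \<le> 1}.
      sqrt (\<Sum>i<n. (\<Sum>j<n. S i j * v j)\<^sup>2))"

text \<open>Ordered samples of k distinct indices from {0..<N} (sampling without replacement).\<close>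
definition inj_samples :: "nat \<Rightarrow> nat \<Rightarrow> (nat \<Rightarrow> nat) set" where
  "inj_samples N k = {s. s \<in> {..<k} \<rightarrow>\<^sub>E {..<N} \<and> inj_on s {..<k}}"

definition S_mat :: "('d \<Rightarrow> real^'r) \<Rightarrow> real^'r^'r \<Rightarrow> (nat \<Rightarrow> 'd) \<Rightarrow> nat \<Rightarrow> nat \<Rightarrow> real" where
  "S_mat phiL A xt = (\<lambda>i j. phiL (xt i) \<bullet> (matrix_inv A *v phiL (xt j)))"

end

theory Submission
  imports Defs
begin

lemma norm_sq_vec: "(norm (v::real^'n))\<^sup>2 = (\<Sum>i\<in>UNIV. (v$i)\<^sup>2)"
  unfolding power2_norm_eq_inner inner_vec_def by (simp add: power2_eq_square)

lemma norm_sq_mat: "(norm (A::real^'n^'m))\<^sup>2 = (\<Sum>i\<in>UNIV. (norm (A$i))\<^sup>2)"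
  proof -
  have "(norm A)\<^sup>2 = (\<Sum>i\<in>UNIV. A$i \<bullet> A$i)" unfolding power2_norm_eq_inner[of A] inner_vec_def ..
  then show ?thesis by (simp only: power2_norm_eq_inner)
qed

lemma mat_vec_nth: "(A *v x) $ i = A$i \<bullet> (x::real^'n)"
  by (simp add: matrix_vector_mult_def inner_vec_def mult.commute)

lemma norm_mat_vec_le: "norm ((A::real^'n^'m) *v x) \<le> norm A * norm x"
proof -
  have "(norm (A *v x))\<^sup>2 = (\<Sum>i\<in>UNIV. (A$i \<bullet> x)\<^sup>2)"
    by (simp add: norm_sq_vec mat_vec_nth)
  also have "\<dots> \<le> (\<Sum>i\<in>UNIV. (norm (A$i))\<^sup>2 * (norm x)\<^sup>2)"
  proof (rule sum_mono)
    fix i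
    have "\<bar>A$i \<bullet> x\<bar> \<le> norm (A$i) * norm x" by (rule Cauchy_Schwarz_ineq2)
    then have "\<bar>A$i \<bullet> x\<bar>\<^sup>2 \<le> (norm (A$i) * norm x)\<^sup>2"
      by (intro power_mono) auto
    then show "(A$i \<bullet> x)\<^sup>2 \<le> (norm (A$i))\<^sup>2 * (norm x)\<^sup>2" by (simp add: power_mult_distrib)
  qed
  also have "\<dots> = (norm A * norm x)\<^sup>2"
    by (simp add: norm_sq_mat power_mult_distrib sum_distrib_right)
  finally show ?thesis
    by (meson mult_nonneg_nonneg norm_ge_zero power2_le_imp_le)
qed

lemma quad_le: "\<bar>v \<bullet> ((A::real^'n^'n) *v v)\<bar> \<le> norm A * (norm v)\<^sup>2"
proof -
  have "\<bar>v \<bullet> (A *v v)\<bar> \<le> norm v * norm (A *v v)" by (rule Cauchy_Schwarz_ineq2)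
  also have "\<dots> \<le> norm v * (norm A * norm v)"
    by (intro mult_left_mono norm_mat_vec_le) auto
  finally show ?thesis by (simp add: power2_eq_square algebra_simps)
qed

lemma inner_mat_sym:
  assumes "transpose S = (S::real^'n^'n)"
  shows "u \<bullet> (S *v v) = v \<bullet> (S *v u)"
proof -
  have "u \<bullet> (S *v v) = (u v* S) \<bullet> v" by (simp add: dot_lmul_matrix)
  also have "u v* S = transpose S *v u" by simp
  finally show ?thesis using assms by (simp add: inner_commute)
qed

lemma coercive_inv:
  fixes A :: "real^'n^'n"
  assumes c: "c > 0" and coer: "\<And>v. v \<bullet> (A *v v) \<ge> c * (norm v)\<^sup>2"
  shows "invertible A" "A *v (matrix_inv A *v w) = w" "matrix_inv A *v (A *v w) = w"
        "norm (matrix_inv A *v w) \<le> norm w / c"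
proof -
  have ker: "\<forall>x. A *v x = 0 \<longrightarrow> x = 0"
  proof (intro allI impI)
    fix x assume "A *v x = 0"
    with coer[of x] have "c * (norm x)\<^sup>2 \<le> 0" by simp
    with c have "(norm x)\<^sup>2 \<le> 0" by (simp add: mult_le_0_iff)
    then show "x = 0" by simp
  qed
  show inv: "invertible A"
    using ker matrix_left_invertible_ker invertible_left_inverse by blast
  then have "A ** matrix_inv A = mat 1 \<and> matrix_inv A ** A = mat 1"
    unfolding invertible_def matrix_inv_def by (rule someI_ex)
  then have AI: "A ** matrix_inv A = mat 1" and IA: "matrix_inv A ** A = mat 1" by auto
  show 1: "A *v (matrix_inv A *v w) = w"
    by (simp add: matrix_vector_mul_assoc AI)
  show "matrix_inv A *v (A *v w) = w"
    by (simp add: matrix_vector_mul_assoc IA)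
  define u where "u = matrix_inv A *v w"
  have "c * (norm u)\<^sup>2 \<le> u \<bullet> (A *v u)" by (rule coer)
  also have "\<dots> = u \<bullet> w" using 1 by (simp add: u_def)
  also have "\<dots> \<le> norm u * norm w" by (rule norm_cauchy_schwarz)
  finally have h: "c * (norm u)\<^sup>2 \<le> norm u * norm w" .
  show "norm (matrix_inv A *v w) \<le> norm w / c"
  proof (cases "norm u = 0")
    case True then show ?thesis using c by (simp add: u_def)
  next
    case False
    then have "norm u > 0" by simp
    with h have "c * norm u \<le> norm w" by (simp add: power2_eq_square)
    with c show ?thesis by (simp add: u_def field_simps)
  qed
qed



lemma eigenvalues_finite:
  fixes S :: "real^'n^'n"
  assumes sym: "transpose S = S"
  shows "finite (eigenvalues S)"
proof -
  define e where "e c = (SOME v. v \<noteq> 0 \<and> S *v v = c *\<^sub>R v)" for c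
  have e: "e c \<noteq> 0 \<and> S *v e c = c *\<^sub>R e c" if "c \<in> eigenvalues S" for c
    using that unfolding eigenvalues_def e_def by (rule CollectE) (rule someI_ex)
  have inj: "inj_on e (eigenvalues S)"
  proof (rule inj_onI)
    fix c d assume c: "c \<in> eigenvalues S" and d: "d \<in> eigenvalues S" and eq: "e c = e d"
    have "c *\<^sub>R e c = d *\<^sub>R e c" using e[OF c] e[OF d] eq by metis
    then have "(c - d) *\<^sub>R e c = 0" by (simp add: algebra_simps)
    then show "c = d" using e[OF c] by simp
  qed
  have po: "pairwise orthogonal (e ` eigenvalues S)"
  proof (clarsimp simp: pairwise_def)
    fix c d assume c: "c \<in> eigenvalues S" and d: "d \<in> eigenvalues S" and ne: "e c \<noteq> e d"
    then have cd: "c \<noteq> d" by auto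
    have "c * (e c \<bullet> e d) = (S *v e c) \<bullet> e d" using e[OF c] by simp
    also have "\<dots> = e c \<bullet> (S *v e d)" using inner_mat_sym[OF sym, of "e d" "e c"] by (simp add: inner_commute)
    also have "\<dots> = d * (e c \<bullet> e d)" using e[OF d] by simp
    finally have "(c - d) * (e c \<bullet> e d) = 0" by (simp add: algebra_simps)
    with cd show "orthogonal (e c) (e d)" by (simp add: orthogonal_def)
  qed
  have "0 \<notin> e ` eigenvalues S" using e by force
  with po have "independent (e ` eigenvalues S)" by (rule pairwise_orthogonal_independent)
  then have "finite (e ` eigenvalues S)" by (rule finiteI_independent)
  then show ?thesis using inj finite_imageD by blast
qed

lemma lambda_min_quad:
  fixes S :: "real^'n^'n"
  assumes sym: "transpose S = S"
  shows "lambda_min S * (norm v)\<^sup>2 \<le> v \<bullet> (S *v v)"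
proof -
  define q where "q w = w \<bullet> (S *v w)" for w
  have "continuous_on (sphere 0 1) q" unfolding q_def
    by (intro continuous_intros matrix_vector_mult_linear_continuous_on)
  then obtain v0 where v0: "v0 \<in> sphere 0 1" and min: "\<And>y. y \<in> sphere 0 1 \<Longrightarrow> q v0 \<le> q y"
  proof -
    have "sphere (0::real^'n) 1 \<noteq> {}" by (simp add: sphere_eq_empty)
    then show ?thesis using continuous_attains_inf[of "sphere (0::real^'n) 1" q] compact_sphere that
      \<open>continuous_on (sphere 0 1) q\<close> by blast
  qed
  define \<mu> where "\<mu> = q v0"
  have qs: "q (a *\<^sub>R w) = a\<^sup>2 * q w" for a w
    by (simp add: q_def matrix_vector_mult_scaleR power2_eq_square)
  have quad: "\<mu> * (norm w)\<^sup>2 \<le> q w" for w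
  proof (cases "w = 0")
    case True then show ?thesis by (simp add: q_def)
  next
    case False
    then have "(1 / norm w) *\<^sub>R w \<in> sphere 0 1" by simp
    from min[OF this] have "\<mu> \<le> (1/norm w)\<^sup>2 * q w" by (simp add: \<mu>_def qs)
    then have "\<mu> * (norm w)\<^sup>2 \<le> (1/norm w)\<^sup>2 * q w * (norm w)\<^sup>2"
      by (intro mult_right_mono) auto
    also have "\<dots> = q w" using False by (simp add: field_simps)
    finally show ?thesis .
  qed
  define r where "r w = S *v w - \<mu> *\<^sub>R w" for w
  have rpos: "0 \<le> w \<bullet> r w" for w using quad[of w]
    by (simp add: r_def q_def inner_diff_right power2_norm_eq_inner)
  have r0: "v0 \<bullet> r v0 = 0" using v0 by (simp add: r_def q_def \<mu>_def inner_diff_right power2_norm_eq_inner[symmetric])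
  have rsym: "a \<bullet> r b = b \<bullet> r a" for a b
    using inner_mat_sym[OF sym, of a b] by (simp add: r_def inner_diff_right inner_commute)
  have rlin: "r (a + t *\<^sub>R b) = r a + t *\<^sub>R r b" for a b t
    by (simp add: r_def matrix_vector_right_distrib matrix_vector_mult_scaleR algebra_simps)
  have "r v0 = 0"
  proof (rule ccontr)
    assume nz: "r v0 \<noteq> 0"
    define z where "z = r v0"
    define a where "a = z \<bullet> z"
    define b where "b = z \<bullet> r z"
    have a: "a > 0" using nz by (simp add: a_def z_def)
    have b: "b \<ge> 0" using rpos by (simp add: b_def)
    define t where "t = - a / (b + 1)"
    have "0 \<le> (v0 + t *\<^sub>R z) \<bullet> r (v0 + t *\<^sub>R z)" by (rule rpos)
    also have "\<dots> = v0 \<bullet> r v0 + t * (v0 \<bullet> r z) + t * (z \<bullet> r v0) + t * t * (z \<bullet> r z)"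
      by (simp add: rlin inner_add_left inner_add_right algebra_simps)
    also have "\<dots> = 2 * t * a + t * t * b"
      using r0 rsym[of v0 z] by (simp add: a_def b_def z_def)
    also have "\<dots> = t * (2 * a + t * b)" by (simp add: algebra_simps)
    also have "\<dots> < 0"
    proof (rule mult_neg_pos)
      show "t < 0" using a b by (simp add: t_def)
      have "b / (b + 1) < 1" using b by simp
      then have "a * (b / (b + 1)) < a * 2" using a
        by (metis less_trans mult_less_cancel_left_pos one_less_numeral_iff semiring_norm(76))
      then show "0 < 2 * a + t * b" by (simp add: t_def)
    qed
    finally show False by simp
  qed
  then have "S *v v0 = \<mu> *\<^sub>R v0" by (simp add: r_def)
  moreover have "v0 \<noteq> 0" using v0 by auto
  ultimately have "\<mu> \<in> eigenvalues S" unfolding eigenvalues_def by blast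
  then have "lambda_min S \<le> \<mu>" unfolding lambda_min_def
    using eigenvalues_finite[OF sym] by (rule Min_le[rotated])
  then have "lambda_min S * (norm v)\<^sup>2 \<le> \<mu> * (norm v)\<^sup>2" by (intro mult_right_mono) auto
  also have "\<dots> \<le> q v" by (rule quad)
  finally show ?thesis by (simp add: q_def)
qed


lemma coercive_A:
  fixes Sig Sh :: "real^'n^'n"
  assumes sym: "transpose Sig = Sig" and a: "a \<ge> 0"
    and h: "norm (Sh - Sig) \<le> t" and tl: "t \<le> lambda_min Sig / 2"
  shows "(1 + a * (lambda_min Sig / 2)) * (norm v)\<^sup>2 \<le> v \<bullet> ((a *\<^sub>R Sh + mat 1) *v v)"
proof -
  have "v \<bullet> (Sh *v v) = v \<bullet> (Sig *v v) + v \<bullet> ((Sh - Sig) *v v)"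
    by (simp add: matrix_vector_mult_diff_rdistrib inner_diff_right)
  also have "\<dots> \<ge> lambda_min Sig * (norm v)\<^sup>2 - norm (Sh - Sig) * (norm v)\<^sup>2"
    using lambda_min_quad[OF sym, of v] abs_le_D2[OF quad_le[of v "Sh - Sig"]] by simp
  finally have "v \<bullet> (Sh *v v) \<ge> lambda_min Sig * (norm v)\<^sup>2 - norm (Sh - Sig) * (norm v)\<^sup>2" .
  moreover have "norm (Sh - Sig) * (norm v)\<^sup>2 \<le> t * (norm v)\<^sup>2"
    using h by (intro mult_right_mono) auto
  ultimately have "v \<bullet> (Sh *v v) \<ge> (lambda_min Sig / 2) * (norm v)\<^sup>2"
    using tl mult_right_mono[of t "lambda_min Sig / 2" "(norm v)\<^sup>2"] by simp
  then have "a * (v \<bullet> (Sh *v v)) \<ge> a * ((lambda_min Sig / 2) * (norm v)\<^sup>2)"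
    using a by (rule mult_left_mono)
  moreover have "v \<bullet> ((a *\<^sub>R Sh + mat 1) *v v) = a * (v \<bullet> (Sh *v v)) + (norm v)\<^sup>2"
    by (simp add: matrix_vector_mult_add_rdistrib scaleR_matrix_vector_assoc[symmetric]
        power2_norm_eq_inner inner_add_right)
  ultimately show ?thesis by (simp add: algebra_simps)
qed

lemma sum_inner_mat:
  fixes M :: "real^'n^'n"
  shows "(\<Sum>j\<in>J. (b \<bullet> (M *v f j)) * v j) = b \<bullet> (M *v (\<Sum>j\<in>J. v j *\<^sub>R f j))"
  by (simp add: vec.sum inner_sum_right matrix_vector_mult_scaleR mult.commute)

lemma spec_norm_bound:
  fixes D :: "real^'n \<Rightarrow> real^'n" and phi :: "nat \<Rightarrow> real^'n"
  assumes lin: "\<And>b (J::nat set) v f. (\<Sum>j\<in>J. (b \<bullet> D (f j)) * v j) = b \<bullet> D (\<Sum>j\<in>J. v j *\<^sub>R f j)"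
    and Dn: "\<And>w. norm (D w) \<le> d * norm w" and d: "d \<ge> 0"
    and K: "\<And>i. norm (phi i) \<le> K"
  shows "spec_norm N' (\<lambda>i j. phi i \<bullet> D (phi j)) \<le> real N' * K\<^sup>2 * d"
  unfolding spec_norm_def
proof (rule cSUP_least)
  show "{v::nat\<Rightarrow>real. (\<Sum>j<N'. (v j)\<^sup>2) \<le> 1} \<noteq> {}" by (rule ex_in_conv[THEN iffD1], rule exI[of _ "\<lambda>_. 0::real"]) simp
next
  fix v :: "nat \<Rightarrow> real" assume "v \<in> {v. (\<Sum>j<N'. (v j)\<^sup>2) \<le> 1}"
  then have v: "(\<Sum>j<N'. (v j)\<^sup>2) \<le> 1" by simp
  have K0: "K \<ge> 0" using K[of 0] norm_ge_zero order_trans by blast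
  define u where "u = (\<Sum>j<N'. v j *\<^sub>R phi j)"
  have "norm u \<le> (\<Sum>j<N'. norm (v j *\<^sub>R phi j))" unfolding u_def by (rule norm_sum)
  also have "\<dots> \<le> (\<Sum>j<N'. \<bar>v j\<bar> * K)"
    using K by (intro sum_mono) (simp add: mult_left_mono)
  also have "\<dots> = K * (\<Sum>j<N'. \<bar>v j\<bar>)" by (simp add: sum_distrib_left mult.commute)
  also have "(\<Sum>j<N'. \<bar>v j\<bar>) \<le> sqrt (real N')"
  proof -
    have "(\<Sum>j<N'. \<bar>v j\<bar>)\<^sup>2 \<le> (\<Sum>j<N'. (\<bar>v j\<bar>)\<^sup>2) * real (card {..<N'})"
      by (rule sum_squared_le_sum_of_squares)
    also have "\<dots> \<le> 1 * real N'" using v mult_right_mono[OF v, of "real N'"] by simp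
    finally show ?thesis by (simp add: real_le_rsqrt)
  qed
  then have "K * (\<Sum>j<N'. \<bar>v j\<bar>) \<le> K * sqrt (real N')" using K0 by (rule mult_left_mono)
  finally have nu: "norm u \<le> K * sqrt (real N')" by simp
  have row: "(\<Sum>j<N'. phi i \<bullet> D (phi j) * v j)\<^sup>2 \<le> (K * (d * (K * sqrt (real N'))))\<^sup>2" for i
  proof -
    have "\<bar>\<Sum>j<N'. phi i \<bullet> D (phi j) * v j\<bar> = \<bar>phi i \<bullet> D u\<bar>" using lin[where b="phi i" and J="{..<N'}" and f=phi and v=v] by (simp add: u_def)
    also have "\<dots> \<le> norm (phi i) * norm (D u)" by (rule Cauchy_Schwarz_ineq2)
    also have "\<dots> \<le> K * (d * (K * sqrt (real N')))"
    proof (rule mult_mono)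
      show "norm (D u) \<le> d * (K * sqrt (real N'))"
        using Dn[of u] mult_left_mono[OF nu d] by linarith
    qed (use K K0 in auto)
    finally have "\<bar>\<Sum>j<N'. phi i \<bullet> D (phi j) * v j\<bar>\<^sup>2 \<le> (K * (d * (K * sqrt (real N'))))\<^sup>2"
      by (rule power_mono) simp
    then show ?thesis by simp
  qed
  have "(\<Sum>i<N'. (\<Sum>j<N'. phi i \<bullet> D (phi j) * v j)\<^sup>2) \<le> (\<Sum>i<N'. (K * (d * (K * sqrt (real N'))))\<^sup>2)"
    by (intro sum_mono row)
  also have "\<dots> = (real N' * K\<^sup>2 * d)\<^sup>2"
    by (simp add: power_mult_distrib power2_eq_square)
  finally show "sqrt (\<Sum>i<N'. (\<Sum>j<N'. phi i \<bullet> D (phi j) * v j)\<^sup>2) \<le> real N' * K\<^sup>2 * d"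
    using d by (intro real_le_lsqrt) auto
qed


lemma det_main:
  fixes Sig SigN Sigk :: "real^'n^'n" and phi :: "nat \<Rightarrow> real^'n"
  assumes sym: "transpose Sig = Sig" and a: "a \<ge> 0" and lam: "lambda_min Sig > 0"
    and hN: "norm (SigN - Sig) \<le> t" and hk: "norm (Sigk - Sig) \<le> t"
    and tl: "t \<le> lambda_min Sig / 2"
    and K: "\<And>i. norm (phi i) \<le> K"
  shows "spec_norm N' (\<lambda>i j. phi i \<bullet> (matrix_inv (a *\<^sub>R Sigk + mat 1) *v phi j)
            - phi i \<bullet> (matrix_inv (a *\<^sub>R SigN + mat 1) *v phi j))
         \<le> real N' * K\<^sup>2 * (a * (2 * t) / (1 + a * (lambda_min Sig / 2))\<^sup>2)"
proof -
  define c where "c = 1 + a * (lambda_min Sig / 2)"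
  have c: "c > 0" using a lam by (simp add: c_def add_pos_nonneg)
  define Ak where "Ak = a *\<^sub>R Sigk + mat 1"
  define AN where "AN = a *\<^sub>R SigN + mat 1"
  have cok: "\<And>v. c * (norm v)\<^sup>2 \<le> v \<bullet> (Ak *v v)"
    unfolding c_def Ak_def by (rule coercive_A[OF sym a hk tl])
  have coN: "\<And>v. c * (norm v)\<^sup>2 \<le> v \<bullet> (AN *v v)"
    unfolding c_def AN_def by (rule coercive_A[OF sym a hN tl])
  note k = coercive_inv[OF c cok] and n = coercive_inv[OF c coN]
  define D where "D w = matrix_inv Ak *v w - matrix_inv AN *v w" for w
  have t0: "t \<ge> 0" using hN norm_ge_zero order_trans by blast
  have nd: "norm (AN - Ak) \<le> a * (2 * t)"
  proof -
    have "AN - Ak = a *\<^sub>R ((SigN - Sig) - (Sigk - Sig))" by (simp add: AN_def Ak_def algebra_simps)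
    then have "norm (AN - Ak) = a * norm ((SigN - Sig) - (Sigk - Sig))" using a by simp
    also have "\<dots> \<le> a * (norm (SigN - Sig) + norm (Sigk - Sig))"
      using a by (intro mult_left_mono norm_triangle_ineq4) auto
    also have "\<dots> \<le> a * (2 * t)" using a hN hk by (intro mult_left_mono) auto
    finally show ?thesis .
  qed
  have Dn: "norm (D w) \<le> (a * (2 * t) / c\<^sup>2) * norm w" for w
  proof -
    define u where "u = matrix_inv AN *v w"
    have "D w = matrix_inv Ak *v (AN *v u) - matrix_inv Ak *v (Ak *v u)"
      by (simp add: D_def u_def n(2) k(3))
    also have "\<dots> = matrix_inv Ak *v ((AN - Ak) *v u)"
      by (simp add: matrix_vector_mult_diff_distrib matrix_vector_mult_diff_rdistrib)
    finally have "norm (D w) = norm (matrix_inv Ak *v ((AN - Ak) *v u))" by simp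
    also have "\<dots> \<le> norm ((AN - Ak) *v u) / c" by (rule k(4))
    also have "\<dots> \<le> (a * (2 * t) * (norm w / c)) / c"
    proof (intro divide_right_mono order_trans[OF norm_mat_vec_le] mult_mono nd)
      show "norm u \<le> norm w / c" unfolding u_def by (rule n(4))
    qed (use c a t0 in auto)
    also have "\<dots> = (a * (2 * t) / c\<^sup>2) * norm w" by (simp add: power2_eq_square)
    finally show ?thesis .
  qed
  have lin: "(\<Sum>j\<in>J. (b \<bullet> D (f j)) * v j) = b \<bullet> D (\<Sum>j\<in>J. v j *\<^sub>R f j)" for b J v f
    by (simp add: D_def inner_diff_right left_diff_distrib sum_subtractf sum_inner_mat)
  have "spec_norm N' (\<lambda>i j. phi i \<bullet> D (phi j)) \<le> real N' * K\<^sup>2 * (a * (2 * t) / c\<^sup>2)"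
    by (rule spec_norm_bound[OF lin Dn]) (use a t0 c K in auto)
  then show ?thesis by (simp add: D_def inner_diff_right Ak_def AN_def c_def)
qed




lemma pb_integrable:
  fixes f :: "'a \<Rightarrow> real"
  assumes "prob_space M" "f \<in> borel_measurable M" "\<And>x. x \<in> space M \<Longrightarrow> \<bar>f x\<bar> \<le> B"
  shows "integrable M f"
proof -
  interpret prob_space M by fact
  show ?thesis using assms(2,3) by (intro integrable_const_bound[where B=B]) auto
qed

lemma pb_int_abs:
  fixes f :: "'a \<Rightarrow> real"
  assumes "prob_space M" "f \<in> borel_measurable M" "\<And>x. x \<in> space M \<Longrightarrow> \<bar>f x\<bar> \<le> B"
  shows "\<bar>integral\<^sup>L M f\<bar> \<le> B"
proof -
  interpret prob_space M by fact
  have "\<bar>integral\<^sup>L M f\<bar> \<le> integral\<^sup>L M (\<lambda>x. \<bar>f x\<bar>)" by (rule integral_abs_bound)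
  also have "\<dots> \<le> integral\<^sup>L M (\<lambda>_. B)"
    using assms by (intro integral_mono integrable_abs pb_integrable[OF assms(1,2)] integrable_const) auto
  finally show ?thesis by (simp add: prob_space)
qed

lemma abs_sq_le: "\<bar>a::real\<bar> \<le> B \<Longrightarrow> a\<^sup>2 \<le> B\<^sup>2"
  using power_mono[of "\<bar>a\<bar>" B 2] by simp

lemma mcd_mgf:
  fixes M :: "'a measure" and f :: "('i \<Rightarrow> 'a) \<Rightarrow> real"
  assumes M: "prob_space M" and I: "finite I"
    and meas: "f \<in> borel_measurable (PiM I (\<lambda>_. M))"
    and bnd: "\<And>x. x \<in> space (PiM I (\<lambda>_. M)) \<Longrightarrow> \<bar>f x\<bar> \<le> B"
    and bd: "\<And>x i y. x \<in> space (PiM I (\<lambda>_. M)) \<Longrightarrow> i \<in> I \<Longrightarrow> y \<in> space M \<Longrightarrow>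
               \<bar>f x - f (x(i := y))\<bar> \<le> c"
    and l: "l > 0"
  shows "(\<integral>\<^sup>+x. ennreal (exp (l * (f x - integral\<^sup>L (PiM I (\<lambda>_. M)) f))) \<partial>PiM I (\<lambda>_. M))
          \<le> ennreal (exp (l\<^sup>2 * real (card I) * (2 * c)\<^sup>2 / 8))"
  using I meas bnd bd
proof (induction I arbitrary: f B rule: finite_induct)
  case empty
  interpret P: prob_space "PiM ({}::'i set) (\<lambda>_. M)" by (rule prob_space_PiM) (use M in auto)
  have sp: "space (PiM ({}::'i set) (\<lambda>_. M)) = {\<lambda>_. undefined}" by (simp add: PiM_empty)
  have "integral\<^sup>L (PiM ({}::'i set) (\<lambda>_. M)) f = integral\<^sup>L (PiM ({}::'i set) (\<lambda>_. M)) (\<lambda>_. f (\<lambda>_. undefined))"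
    by (rule Bochner_Integration.integral_cong) (auto simp: sp)
  then have int: "integral\<^sup>L (PiM ({}::'i set) (\<lambda>_. M)) f = f (\<lambda>_. undefined)" by (simp add: P.prob_space)
  have "(\<integral>\<^sup>+x. ennreal (exp (l * (f x - integral\<^sup>L (PiM ({}::'i set) (\<lambda>_. M)) f))) \<partial>PiM ({}::'i set) (\<lambda>_. M))
        = (\<integral>\<^sup>+x. 1 \<partial>PiM ({}::'i set) (\<lambda>_. M))"
    by (intro nn_integral_cong) (auto simp: sp int)
  also have "\<dots> = 1" using P.emeasure_space_1 by simp
  finally show ?case by simp
next
  case (insert j I)
  interpret PP: product_prob_space "\<lambda>_. M" by (rule product_prob_spaceI) (use M in auto)
  let ?P = "PiM I (\<lambda>_. M)" and ?Q = "PiM (insert j I) (\<lambda>_. M)"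
  interpret P: prob_space ?P by (rule prob_space_PiM) (use M in auto)
  interpret Q: prob_space ?Q by (rule prob_space_PiM) (use M in auto)
  have fm[measurable]: "f \<in> borel_measurable ?Q" by (rule insert.prems)
  have fpair[measurable]: "(\<lambda>(x, y). f (x(j := y))) \<in> borel_measurable (?P \<Otimes>\<^sub>M M)"
    using measurable_comp[OF measurable_add_dim[of j I "\<lambda>_. M"] fm] by (simp add: comp_def split_beta')
  have upd: "x(j := y) \<in> space ?Q" if "x \<in> space ?P" "y \<in> space M" for x y
    using that by (auto simp: space_PiM PiE_def extensional_def)
  have Fm[measurable]: "(\<lambda>y. f (x(j := y))) \<in> borel_measurable M" if "x \<in> space ?P" for x
    using measurable_comp[OF measurable_component_update fm, OF that \<open>j \<notin> I\<close>] by (simp add: comp_def fun_upd_def)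
  have Fb: "\<bar>f (x(j := y))\<bar> \<le> B" if "x \<in> space ?P" "y \<in> space M" for x y
    using insert.prems(2) upd[OF that] by blast
  have Fi: "integrable M (\<lambda>y. f (x(j := y)))" if "x \<in> space ?P" for x
    by (rule pb_integrable[OF M Fm[OF that]]) (use Fb that in auto)
  define g where "g x = (\<integral>y. f (x(j := y)) \<partial>M)" for x
  have gm[measurable]: "g \<in> borel_measurable ?P"
    unfolding g_def using sigma_finite_measure.borel_measurable_lebesgue_integral[OF prob_space_imp_sigma_finite[OF M] fpair] by simp
  have gb: "\<bar>g x\<bar> \<le> B" if "x \<in> space ?P" for x
    unfolding g_def by (rule pb_int_abs[OF M Fm[OF that]]) (use Fb that in auto)
  have gd: "\<bar>g x - g (x(i := z))\<bar> \<le> c" if x: "x \<in> space ?P" and i: "i \<in> I" and z: "z \<in> space M" for x i z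
  proof -
    have xz: "x(i := z) \<in> space ?P" using x z i by (auto simp: space_PiM PiE_def extensional_def)
    have ij: "i \<noteq> j" using i insert.hyps by auto
    have "g x - g (x(i := z)) = (\<integral>y. f (x(j := y)) - f ((x(j := y))(i := z)) \<partial>M)"
      unfolding g_def using Fi[OF x] Fi[OF xz] ij by (subst Bochner_Integration.integral_diff) (auto simp: fun_upd_twist)
    also have "\<bar>\<dots>\<bar> \<le> c"
    proof (rule pb_int_abs[OF M])
      show "(\<lambda>y. f (x(j := y)) - f ((x(j := y))(i := z))) \<in> borel_measurable M"
        using Fm[OF x] Fm[OF xz] ij by (simp add: fun_upd_twist)
      show "\<bar>f (x(j := y)) - f ((x(j := y))(i := z))\<bar> \<le> c" if "y \<in> space M" for y
        using insert.prems(3)[OF upd[OF x that], of i z] i z by (auto simp: fun_upd_def)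
    qed
    finally show ?thesis .
  qed
  have IH: "(\<integral>\<^sup>+x. ennreal (exp (l * (g x - integral\<^sup>L ?P g))) \<partial>?P)
          \<le> ennreal (exp (l\<^sup>2 * real (card I) * (2 * c)\<^sup>2 / 8))"
    by (rule insert.IH[OF gm gb gd]) auto
  have fint: "integrable ?Q f" by (rule pb_integrable[OF Q.prob_space_axioms fm insert.prems(2)])
  have Ef: "integral\<^sup>L ?Q f = integral\<^sup>L ?P g"
    unfolding g_def by (rule PP.product_integral_insert[OF insert.hyps fint])
  define C where "C = exp (l\<^sup>2 * (2 * c)\<^sup>2 / 8)"
  have inner: "(\<integral>\<^sup>+y. ennreal (exp (l * (f (x(j := y)) - integral\<^sup>L ?Q f))) \<partial>M)
      \<le> ennreal (exp (l * (g x - integral\<^sup>L ?P g))) * ennreal C" if x: "x \<in> space ?P" for x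
  proof -
    have Fr: "f (x(j := y)) \<in> {g x - c .. g x + c}" if y: "y \<in> space M" for y
    proof -
      have "g x - f (x(j := y)) = (\<integral>y'. f ((x(j := y))(j := y')) - f (x(j := y)) \<partial>M)"
        unfolding g_def using Fi[OF x] by (subst Bochner_Integration.integral_diff) (auto simp: prob_space.prob_space[OF M])
      also have "\<bar>\<dots>\<bar> \<le> c"
      proof (rule pb_int_abs[OF M])
        show "(\<lambda>y'. f ((x(j := y))(j := y')) - f (x(j := y))) \<in> borel_measurable M"
          using Fm[OF x] by simp
        show "\<bar>f ((x(j := y))(j := y')) - f (x(j := y))\<bar> \<le> c" if "y' \<in> space M" for y'
          using insert.prems(3)[OF upd[OF x y], of j y'] that by (simp add: abs_minus_commute fun_upd_def)
      qed
      finally show ?thesis by auto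
    qed
    interpret H: interval_bounded_random_variable M "\<lambda>y. f (x(j := y))" "g x - c" "g x + c"
      by unfold_locales (use Fm[OF x] Fr in auto)
    have H1: "(\<integral>\<^sup>+y. ennreal (exp (l * (f (x(j := y)) - g x))) \<partial>M) \<le> ennreal C"
      using H.Hoeffdings_lemma_nn_integral[OF l] by (simp add: g_def C_def)
    have "(\<integral>\<^sup>+y. ennreal (exp (l * (f (x(j := y)) - integral\<^sup>L ?Q f))) \<partial>M)
        = (\<integral>\<^sup>+y. ennreal (exp (l * (g x - integral\<^sup>L ?P g))) * ennreal (exp (l * (f (x(j := y)) - g x))) \<partial>M)"
      by (intro nn_integral_cong) (simp add: Ef ennreal_mult'[symmetric] exp_add[symmetric] algebra_simps)
    also have "\<dots> = ennreal (exp (l * (g x - integral\<^sup>L ?P g))) * (\<integral>\<^sup>+y. ennreal (exp (l * (f (x(j := y)) - g x))) \<partial>M)"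
      by (rule nn_integral_cmult) (use Fm[OF x] in measurable)
    also have "\<dots> \<le> ennreal (exp (l * (g x - integral\<^sup>L ?P g))) * ennreal C"
      by (intro mult_left_mono H1) auto
    finally show ?thesis .
  qed
  have "(\<integral>\<^sup>+x. ennreal (exp (l * (f x - integral\<^sup>L ?Q f))) \<partial>?Q)
      = (\<integral>\<^sup>+x. (\<integral>\<^sup>+y. ennreal (exp (l * (f (x(j := y)) - integral\<^sup>L ?Q f))) \<partial>M) \<partial>?P)"
    by (rule PP.product_nn_integral_insert[OF insert.hyps]) measurable
  also have "\<dots> \<le> (\<integral>\<^sup>+x. ennreal (exp (l * (g x - integral\<^sup>L ?P g))) * ennreal C \<partial>?P)"
    by (intro nn_integral_mono inner)
  also have "\<dots> = (\<integral>\<^sup>+x. ennreal (exp (l * (g x - integral\<^sup>L ?P g))) \<partial>?P) * ennreal C"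
    by (rule nn_integral_multc) measurable
  also have "\<dots> \<le> ennreal (exp (l\<^sup>2 * real (card I) * (2 * c)\<^sup>2 / 8)) * ennreal C"
    by (intro mult_right_mono IH) auto
  also have "\<dots> = ennreal (exp (l\<^sup>2 * real (card (insert j I)) * (2 * c)\<^sup>2 / 8))"
    using insert.hyps by (simp add: C_def ennreal_mult'[symmetric] exp_add[symmetric] algebra_simps add_divide_distrib)
  finally show ?case .
qed


lemma mcd_tail:
  fixes M :: "'a measure" and f :: "('i \<Rightarrow> 'a) \<Rightarrow> real"
  assumes M: "prob_space M" and I: "finite I" "I \<noteq> {}"
    and meas: "f \<in> borel_measurable (PiM I (\<lambda>_. M))"
    and bnd: "\<And>x. x \<in> space (PiM I (\<lambda>_. M)) \<Longrightarrow> \<bar>f x\<bar> \<le> B"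
    and bd: "\<And>x i y. x \<in> space (PiM I (\<lambda>_. M)) \<Longrightarrow> i \<in> I \<Longrightarrow> y \<in> space M \<Longrightarrow>
               \<bar>f x - f (x(i := y))\<bar> \<le> c"
    and c: "c > 0" and u: "u > 0"
  shows "emeasure (PiM I (\<lambda>_. M)) {x \<in> space (PiM I (\<lambda>_. M)). f x - integral\<^sup>L (PiM I (\<lambda>_. M)) f \<ge> u}
          \<le> ennreal (exp (- u\<^sup>2 / (2 * real (card I) * c\<^sup>2)))"
proof -
  let ?P = "PiM I (\<lambda>_. M)"
  define E where "E = integral\<^sup>L ?P f"
  define n where "n = real (card I)"
  have n: "n > 0" using I by (simp add: n_def card_gt_0_iff)
  define l where "l = u / (n * c\<^sup>2)"
  have l: "l > 0" using n c u by (simp add: l_def)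
  have mgf: "(\<integral>\<^sup>+x. ennreal (exp (l * (f x - E))) \<partial>?P) \<le> ennreal (exp (l\<^sup>2 * n * (2 * c)\<^sup>2 / 8))"
    unfolding E_def n_def by (rule mcd_mgf[OF M I(1) meas bnd bd l])
  let ?A = "{x \<in> space ?P. f x - E \<ge> u}"
  have Am: "?A \<in> sets ?P" using meas by measurable
  have "emeasure ?P ?A = (\<integral>\<^sup>+x. indicator ?A x \<partial>?P)" using Am by simp
  also have "\<dots> \<le> (\<integral>\<^sup>+x. ennreal (exp (l * (f x - E))) * ennreal (exp (- l * u)) \<partial>?P)"
  proof (rule nn_integral_mono)
    fix x assume x: "x \<in> space ?P"
    show "indicator ?A x \<le> ennreal (exp (l * (f x - E))) * ennreal (exp (- l * u))"
    proof (cases "x \<in> ?A")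
      case True
      then have "l * u \<le> l * (f x - E)" using l by (intro mult_left_mono) auto
      then have "1 \<le> exp (l * (f x - E)) * exp (- l * u)" by (simp add: exp_add[symmetric])
      then show ?thesis using True by (simp add: ennreal_mult'[symmetric])
    qed simp
  qed
  also have "\<dots> = (\<integral>\<^sup>+x. ennreal (exp (l * (f x - E))) \<partial>?P) * ennreal (exp (- l * u))"
    by (rule nn_integral_multc) (use meas in measurable)
  also have "\<dots> \<le> ennreal (exp (l\<^sup>2 * n * (2 * c)\<^sup>2 / 8)) * ennreal (exp (- l * u))"
    by (intro mult_right_mono mgf) auto
  also have "\<dots> = ennreal (exp (l\<^sup>2 * n * (2 * c)\<^sup>2 / 8 - l * u))"
    by (simp add: ennreal_mult'[symmetric] exp_add[symmetric])
  also have "l\<^sup>2 * n * (2 * c)\<^sup>2 / 8 - l * u = - u\<^sup>2 / (2 * n * c\<^sup>2)"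
    using n c by (simp add: l_def power2_eq_square field_simps)
  finally show ?thesis by (simp add: E_def n_def)
qed


lemma sec_moment:
  fixes M :: "'a measure" and Y :: "'a \<Rightarrow> 'b::euclidean_space"
  assumes M: "prob_space M" and I: "finite I"
    and Ym[measurable]: "Y \<in> borel_measurable M"
    and Yb: "\<And>y. y \<in> space M \<Longrightarrow> norm (Y y) \<le> b"
    and Y0: "integral\<^sup>L M Y = 0"
  shows "(\<integral>x. (norm (\<Sum>i\<in>I. Y (x i)))\<^sup>2 \<partial>PiM I (\<lambda>_. M)) \<le> real (card I) * b\<^sup>2"
  using I
proof (induction I rule: finite_induct)
  case empty
  then show ?case by simp
next
  case (insert j I)
  interpret PP: product_prob_space "\<lambda>_. M" by (rule product_prob_spaceI) (use M in auto)
  let ?P = "PiM I (\<lambda>_. M)" and ?Q = "PiM (insert j I) (\<lambda>_. M)"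
  interpret P: prob_space ?P by (rule prob_space_PiM) (use M in auto)
  interpret Q: prob_space ?Q by (rule prob_space_PiM) (use M in auto)
  have b0: "b \<ge> 0" using Yb prob_space.not_empty[OF M] norm_ge_zero order_trans by blast
  define S where "S x = (\<Sum>i\<in>I. Y (x i))" for x
  have Sm[measurable]: "S \<in> borel_measurable ?P" unfolding S_def by measurable
  have Sb: "norm (S x) \<le> real (card I) * b" if "x \<in> space ?P" for x
  proof -
    have "norm (S x) \<le> (\<Sum>i\<in>I. norm (Y (x i)))" unfolding S_def by (rule norm_sum)
    also have "\<dots> \<le> (\<Sum>i\<in>I. b)" using that by (intro sum_mono Yb) (auto simp: space_PiM)
    finally show ?thesis by simp
  qed
  have hm[measurable]: "(\<lambda>x. (norm (\<Sum>i\<in>insert j I. Y (x i)))\<^sup>2) \<in> borel_measurable ?Q" by measurable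
  have hb: "\<bar>(norm (\<Sum>i\<in>insert j I. Y (x i)))\<^sup>2\<bar> \<le> (real (card (insert j I)) * b)\<^sup>2" if "x \<in> space ?Q" for x
  proof -
    have "norm (\<Sum>i\<in>insert j I. Y (x i)) \<le> (\<Sum>i\<in>insert j I. norm (Y (x i)))" by (rule norm_sum)
    also have "\<dots> \<le> (\<Sum>i\<in>insert j I. b)" using that by (intro sum_mono Yb) (auto simp: space_PiM)
    finally have "norm (\<Sum>i\<in>insert j I. Y (x i)) \<le> real (card (insert j I)) * b" by simp
    then show ?thesis by (simp add: power_mono)
  qed
  have hint: "integrable ?Q (\<lambda>x. (norm (\<Sum>i\<in>insert j I. Y (x i)))\<^sup>2)"
    by (rule pb_integrable[OF Q.prob_space_axioms hm hb])
  have Yint: "integrable M Y"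
    by (rule finite_measure.integrable_const_bound[where B=b]) (use M Yb in \<open>auto simp: prob_space_def\<close>)
  have Y2int: "integrable M (\<lambda>y. (norm (Y y))\<^sup>2)"
    by (rule pb_integrable[OF M, where B="b\<^sup>2"]) (use Yb b0 in \<open>auto simp: abs_le_square_iff power_mono\<close>)
  have EY2: "(\<integral>y. (norm (Y y))\<^sup>2 \<partial>M) \<le> b\<^sup>2"
    using pb_int_abs[OF M _ , of "\<lambda>y. (norm (Y y))\<^sup>2" "b\<^sup>2"] Yb b0 by (auto simp: power_mono)
  have inner: "(\<integral>y. (norm (\<Sum>i\<in>insert j I. Y ((x(j := y)) i)))\<^sup>2 \<partial>M)
       = (\<integral>y. (norm (Y y))\<^sup>2 \<partial>M) + (norm (S x))\<^sup>2" if x: "x \<in> space ?P" for x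
  proof -
    have "(\<Sum>i\<in>insert j I. Y ((x(j := y)) i)) = Y y + S x" for y
      using insert.hyps by (simp add: S_def) (intro sum.cong, auto)
    then have "(\<integral>y. (norm (\<Sum>i\<in>insert j I. Y ((x(j := y)) i)))\<^sup>2 \<partial>M)
        = (\<integral>y. (norm (Y y))\<^sup>2 + (2 * (Y y \<bullet> S x) + (norm (S x))\<^sup>2) \<partial>M)"
      by (simp add: power2_norm_eq_inner inner_add_left inner_add_right inner_commute algebra_simps)
    also have "\<dots> = (\<integral>y. (norm (Y y))\<^sup>2 \<partial>M) + (\<integral>y. 2 * (Y y \<bullet> S x) + (norm (S x))\<^sup>2 \<partial>M)"
      using Yint Y2int by (intro Bochner_Integration.integral_add) auto
    also have "(\<integral>y. 2 * (Y y \<bullet> S x) + (norm (S x))\<^sup>2 \<partial>M) = 2 * ((\<integral>y. Y y \<partial>M) \<bullet> S x) + (norm (S x))\<^sup>2"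
      using Yint by (simp add: Bochner_Integration.integral_add prob_space.prob_space[OF M])
    finally show ?thesis using Y0 by simp
  qed
  have "(\<integral>x. (norm (\<Sum>i\<in>insert j I. Y (x i)))\<^sup>2 \<partial>?Q)
      = (\<integral>x. (\<integral>y. (norm (\<Sum>i\<in>insert j I. Y ((x(j := y)) i)))\<^sup>2 \<partial>M) \<partial>?P)"
    by (rule PP.product_integral_insert[OF insert.hyps hint])
  also have "\<dots> = (\<integral>x. (\<integral>y. (norm (Y y))\<^sup>2 \<partial>M) + (norm (S x))\<^sup>2 \<partial>?P)"
    by (rule Bochner_Integration.integral_cong[OF refl inner])
  also have "\<dots> = (\<integral>y. (norm (Y y))\<^sup>2 \<partial>M) + (\<integral>x. (norm (S x))\<^sup>2 \<partial>?P)"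
  proof -
    have "integrable ?P (\<lambda>x. (norm (S x))\<^sup>2)"
      by (rule pb_integrable[OF P.prob_space_axioms, where B="(real (card I) * b)\<^sup>2"])
         (use Sb in \<open>auto simp: power_mono\<close>)
    then show ?thesis by (simp add: Bochner_Integration.integral_add P.prob_space)
  qed
  also have "\<dots> \<le> b\<^sup>2 + real (card I) * b\<^sup>2"
    using EY2 insert.IH by (simp add: S_def)
  finally show ?case using insert.hyps by (simp add: algebra_simps)
qed


lemma conc:
  fixes M :: "'a measure" and Y :: "'a \<Rightarrow> 'b::euclidean_space"
  assumes M: "prob_space M" and I: "finite I" "I \<noteq> {}"
    and Ym[measurable]: "Y \<in> borel_measurable M"
    and Yb: "\<And>y. y \<in> space M \<Longrightarrow> norm (Y y) \<le> B"
    and Yd: "\<And>y y'. y \<in> space M \<Longrightarrow> y' \<in> space M \<Longrightarrow> norm (Y y - Y y') \<le> C"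
    and C: "C > 0"
    and Y0: "integral\<^sup>L M Y = 0"
    and d: "0 < d" "d < 1"
  shows "emeasure (PiM I (\<lambda>_. M)) {x \<in> space (PiM I (\<lambda>_. M)).
            norm ((1 / real (card I)) *\<^sub>R (\<Sum>i\<in>I. Y (x i))) > B / sqrt (real (card I)) + C * sqrt (2 * ln (1 / d) / real (card I))}
          \<le> ennreal d"
proof -
  let ?P = "PiM I (\<lambda>_. M)"
  interpret P: prob_space ?P by (rule prob_space_PiM) (use M in auto)
  define m where "m = real (card I)"
  have m: "m > 0" using I by (simp add: m_def card_gt_0_iff)
  have B0: "B \<ge> 0" using Yb prob_space.not_empty[OF M] norm_ge_zero order_trans by blast
  define f where "f x = norm ((1 / m) *\<^sub>R (\<Sum>i\<in>I. Y (x i)))" for x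
  have fm[measurable]: "f \<in> borel_measurable ?P" unfolding f_def by measurable
  have fb: "\<bar>f x\<bar> \<le> B" if "x \<in> space ?P" for x
  proof -
    have "norm (\<Sum>i\<in>I. Y (x i)) \<le> (\<Sum>i\<in>I. norm (Y (x i)))" by (rule norm_sum)
    also have "\<dots> \<le> (\<Sum>i\<in>I. B)" using that by (intro sum_mono Yb) (auto simp: space_PiM)
    finally have "norm (\<Sum>i\<in>I. Y (x i)) \<le> m * B" by (simp add: m_def)
    then show ?thesis using m by (simp add: f_def field_simps)
  qed
  have fd: "\<bar>f x - f (x(i := y))\<bar> \<le> C / m" if x: "x \<in> space ?P" and i: "i \<in> I" and y: "y \<in> space M" for x i y
  proof -
    have "(\<Sum>k\<in>I. Y ((x(i := y)) k)) = Y y + (\<Sum>k\<in>I - {i}. Y (x k))"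
      using I i by (simp add: sum.remove)
    moreover have "(\<Sum>k\<in>I. Y (x k)) = Y (x i) + (\<Sum>k\<in>I - {i}. Y (x k))"
      using I i by (simp add: sum.remove)
    ultimately have "(\<Sum>k\<in>I. Y (x k)) - (\<Sum>k\<in>I. Y ((x(i := y)) k)) = Y (x i) - Y y" by simp
    then have eq: "(1 / m) *\<^sub>R (\<Sum>k\<in>I. Y (x k)) - (1 / m) *\<^sub>R (\<Sum>k\<in>I. Y ((x(i := y)) k))
        = (1 / m) *\<^sub>R (Y (x i) - Y y)" by (simp add: scaleR_diff_right[symmetric])
    have "\<bar>f x - f (x(i := y))\<bar> \<le> norm ((1 / m) *\<^sub>R (\<Sum>k\<in>I. Y (x k)) - (1 / m) *\<^sub>R (\<Sum>k\<in>I. Y ((x(i := y)) k)))"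
      unfolding f_def by (rule norm_triangle_ineq3)
    also have "\<dots> = norm ((1 / m) *\<^sub>R (Y (x i) - Y y))" by (simp only: eq)
    also have "\<dots> = norm (Y (x i) - Y y) / m" using m by simp
    also have "\<dots> \<le> C / m" using x i y m by (intro divide_right_mono Yd) (auto simp: space_PiM)
    finally show ?thesis .
  qed
  have fint: "integrable ?P f" by (rule pb_integrable[OF P.prob_space_axioms fm fb])
  have f2b: "\<bar>(f x)\<^sup>2\<bar> \<le> B\<^sup>2" if "x \<in> space ?P" for x
  proof -
    have "(f x)\<^sup>2 \<le> B\<^sup>2" by (rule abs_sq_le[OF fb[OF that]])
    then show ?thesis by simp
  qed
  have f2int: "integrable ?P (\<lambda>x. (f x)\<^sup>2)"
    by (rule pb_integrable[OF P.prob_space_axioms _ f2b]) simp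
  have Ef2: "(\<integral>x. (f x)\<^sup>2 \<partial>?P) \<le> B\<^sup>2 / m"
  proof -
    have "(\<integral>x. (f x)\<^sup>2 \<partial>?P) = (\<integral>x. (norm (\<Sum>i\<in>I. Y (x i)))\<^sup>2 / m\<^sup>2 \<partial>?P)"
      using m by (intro Bochner_Integration.integral_cong refl) (simp add: f_def power_divide power_mult_distrib)
    also have "\<dots> = (\<integral>x. (norm (\<Sum>i\<in>I. Y (x i)))\<^sup>2 \<partial>?P) / m\<^sup>2" by simp
    also have "\<dots> \<le> (m * B\<^sup>2) / m\<^sup>2"
      using sec_moment[OF M I(1) Ym Yb Y0] by (intro divide_right_mono) (auto simp: m_def)
    also have "\<dots> = B\<^sup>2 / m" using m by (simp add: power2_eq_square)
    finally show ?thesis .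
  qed
  have Ef: "integral\<^sup>L ?P f \<le> B / sqrt m"
  proof -
    have v1: "0 \<le> (\<integral>x. (f x - integral\<^sup>L ?P f)\<^sup>2 \<partial>?P)" by (rule P.variance_positive)
    have v2: "(\<integral>x. (f x - integral\<^sup>L ?P f)\<^sup>2 \<partial>?P) = (\<integral>x. (f x)\<^sup>2 \<partial>?P) - (integral\<^sup>L ?P f)\<^sup>2"
      by (rule P.variance_eq[OF fint f2int])
    have "(integral\<^sup>L ?P f)\<^sup>2 \<le> (\<integral>x. (f x)\<^sup>2 \<partial>?P)" using v1 v2 by linarith
    also have "\<dots> \<le> B\<^sup>2 / m" by (rule Ef2)
    also have "B\<^sup>2 / m = (B / sqrt m)\<^sup>2" using m by (simp add: power_divide)
    finally have "(integral\<^sup>L ?P f)\<^sup>2 \<le> (B / sqrt m)\<^sup>2" .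
    moreover have "0 \<le> B / sqrt m" using B0 m by simp
    ultimately show ?thesis by (rule power2_le_imp_le)
  qed
  define u where "u = C * sqrt (2 * ln (1 / d) / m)"
  have u: "u > 0" using C d m by (simp add: u_def)
  have "{x \<in> space ?P. norm ((1 / m) *\<^sub>R (\<Sum>i\<in>I. Y (x i))) > B / sqrt m + u}
        \<subseteq> {x \<in> space ?P. f x - integral\<^sup>L ?P f \<ge> u}"
    using Ef by (auto simp: f_def)
  then have "emeasure ?P {x \<in> space ?P. norm ((1 / m) *\<^sub>R (\<Sum>i\<in>I. Y (x i))) > B / sqrt m + u}
        \<le> emeasure ?P {x \<in> space ?P. f x - integral\<^sup>L ?P f \<ge> u}"
    by (rule emeasure_mono) measurable
  also have "\<dots> \<le> ennreal (exp (- u\<^sup>2 / (2 * real (card I) * (C / m)\<^sup>2)))"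
    by (rule mcd_tail[OF M I fm fb fd]) (use C m u in auto)
  also have "- u\<^sup>2 / (2 * real (card I) * (C / m)\<^sup>2) = - ln (1 / d)"
    using C m d by (simp add: u_def m_def[symmetric] power_mult_distrib power_divide field_simps) (simp add: power2_eq_square)
  also have "exp (- ln (1 / d)) = d" using d by (simp add: ln_div)
  finally show ?thesis by (simp add: m_def u_def)
qed



lemma bad_event:
  fixes M :: "'a measure" and Y :: "'a \<Rightarrow> 'b::euclidean_space" and I J :: "'i set"
  assumes M: "prob_space M" and J: "finite J" and IJ: "I \<subseteq> J" and I: "I \<noteq> {}"
    and Ym[measurable]: "Y \<in> borel_measurable M"
    and Yb: "\<And>y. y \<in> space M \<Longrightarrow> norm (Y y) \<le> B"
    and Yd: "\<And>y y'. y \<in> space M \<Longrightarrow> y' \<in> space M \<Longrightarrow> norm (Y y - Y y') \<le> C"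
    and C: "C > 0"
    and Y0: "integral\<^sup>L M Y = 0"
    and d: "0 < d" "d < 1"
    and thr: "B / sqrt (real (card I)) + C * sqrt (2 * ln (1 / d) / real (card I)) \<le> T"
  shows "emeasure (PiM J (\<lambda>_. M)) {xs \<in> space (PiM J (\<lambda>_. M)).
            norm ((1 / real (card I)) *\<^sub>R (\<Sum>i\<in>I. Y (xs i))) > T} \<le> ennreal d"
proof -
  interpret PP: product_prob_space "\<lambda>_. M" J by (rule product_prob_spaceI) (use M in auto)
  have If: "finite I" using J IJ finite_subset by blast
  let ?PJ = "PiM J (\<lambda>_. M)" and ?PI = "PiM I (\<lambda>_. M)"
  have D: "distr ?PJ ?PI (\<lambda>x. restrict x I) = ?PI"
    by (rule PP.distr_PiM_restrict_finite[OF If IJ])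
  have "emeasure ?PJ {xs \<in> space ?PJ. norm ((1 / real (card I)) *\<^sub>R (\<Sum>i\<in>I. Y (xs i))) > T}
      = emeasure ?PJ {xs \<in> space ?PJ. norm ((1 / real (card I)) *\<^sub>R (\<Sum>i\<in>I. Y (restrict xs I i))) > T}"
    by (intro arg_cong[where f="emeasure ?PJ"]) auto
  also have "\<dots> = emeasure (distr ?PJ ?PI (\<lambda>x. restrict x I)) {x \<in> space ?PI. norm ((1 / real (card I)) *\<^sub>R (\<Sum>i\<in>I. Y (x i))) > T}"
    by (rule emeasure_Collect_distr[symmetric], rule measurable_restrict_subset[OF IJ]) measurable
  also have "\<dots> = emeasure ?PI {x \<in> space ?PI. norm ((1 / real (card I)) *\<^sub>R (\<Sum>i\<in>I. Y (x i))) > T}"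
    by (simp only: D)
  also have "\<dots> \<le> emeasure ?PI {x \<in> space ?PI. norm ((1 / real (card I)) *\<^sub>R (\<Sum>i\<in>I. Y (x i))) >
                 B / sqrt (real (card I)) + C * sqrt (2 * ln (1 / d) / real (card I))}"
    by (rule emeasure_mono) (use thr in auto, measurable)
  also have "\<dots> \<le> ennreal d" by (rule conc[OF M If I Ym Yb Yd C Y0 d])
  finally show ?thesis .
qed

lemma outer_inner: "outer a \<bullet> outer b = (a \<bullet> (b::real^'n))\<^sup>2"
proof -
  have "outer a \<bullet> outer b = (\<Sum>i\<in>UNIV. \<Sum>j\<in>UNIV. (a$i * b$i) * (a$j * b$j))"
    by (simp add: outer_def inner_vec_def algebra_simps)
  also have "\<dots> = (\<Sum>i\<in>UNIV. a$i * b$i) * (\<Sum>j\<in>UNIV. a$j * b$j)"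
    by (simp add: sum_product)
  finally show ?thesis by (simp add: inner_vec_def power2_eq_square)
qed

lemma norm_outer: "norm (outer (a::real^'n)) = (norm a)\<^sup>2"
proof -
  have "(norm (outer a))\<^sup>2 = ((norm a)\<^sup>2)\<^sup>2"
    by (simp add: power2_norm_eq_inner outer_inner)
  then show ?thesis by (rule power2_eq_imp_eq) auto
qed

lemma norm_outer_diff:
  assumes "norm (a::real^'n) \<le> K" "norm b \<le> K"
  shows "norm (outer a - outer b) \<le> sqrt 2 * K\<^sup>2"
proof -
  have K: "K \<ge> 0" using assms(1) norm_ge_zero order_trans by blast
  have a4: "(norm a)\<^sup>2 \<le> K\<^sup>2" using assms(1) by (simp add: power_mono)
  have b4: "(norm b)\<^sup>2 \<le> K\<^sup>2" using assms(2) by (simp add: power_mono)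
  have a5: "((norm a)\<^sup>2)\<^sup>2 \<le> (K\<^sup>2)\<^sup>2" by (rule power_mono[OF a4]) simp
  have b5: "((norm b)\<^sup>2)\<^sup>2 \<le> (K\<^sup>2)\<^sup>2" by (rule power_mono[OF b4]) simp
  have e1: "(norm (outer a - outer b))\<^sup>2 = (outer a - outer b) \<bullet> (outer a - outer b)"
    by (rule power2_norm_eq_inner)
  also have "\<dots> = outer a \<bullet> outer a - 2 * (outer a \<bullet> outer b) + outer b \<bullet> outer b"
    by (simp add: inner_diff_left inner_diff_right inner_commute[of "outer b" "outer a"])
  also have "\<dots> = ((norm a)\<^sup>2)\<^sup>2 - 2 * (a \<bullet> b)\<^sup>2 + ((norm b)\<^sup>2)\<^sup>2"
    by (simp only: outer_inner power2_norm_eq_inner)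
  finally have e: "(norm (outer a - outer b))\<^sup>2 = ((norm a)\<^sup>2)\<^sup>2 - 2 * (a \<bullet> b)\<^sup>2 + ((norm b)\<^sup>2)\<^sup>2" .
  have s2: "(sqrt 2 * K\<^sup>2)\<^sup>2 = (K\<^sup>2)\<^sup>2 + (K\<^sup>2)\<^sup>2" by (simp add: power_mult_distrib)
  have "(norm (outer a - outer b))\<^sup>2 \<le> (sqrt 2 * K\<^sup>2)\<^sup>2"
    unfolding e s2 using a5 b5 zero_le_power2[of "a \<bullet> b"] by linarith
  moreover have "0 \<le> sqrt 2 * K\<^sup>2" by simp
  ultimately show ?thesis by (rule power2_le_imp_le)
qed

lemma transpose_outer: "transpose (outer (a::real^'n)) = outer a"
  by (simp add: outer_def transpose_def mult.commute)

lemma cont_outer: "continuous_on UNIV (outer :: real^'n \<Rightarrow> real^'n^'n)"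
  unfolding outer_def by (intro continuous_intros)

lemma bl_entry: "bounded_linear (\<lambda>A::real^'n^'m. A $ i $ j)"
  by (rule bounded_linear_compose[OF bounded_linear_vec_nth bounded_linear_vec_nth])

lemma key_ineq:
  fixes s :: real
  assumes "ln (2::real) \<ge> 2/3"
  shows "(1 + s)\<^sup>2 \<le> 8/3 * (ln 2 + s\<^sup>2)"
proof -
  have h0: "0 \<le> (s - 3/5)\<^sup>2" by simp
  have h1: "(s - 3/5)\<^sup>2 = s\<^sup>2 - 6/5 * s + 9/25" by (simp add: power2_eq_square algebra_simps)
  have h2: "(1 + s)\<^sup>2 = 1 + 2 * s + s\<^sup>2" by (simp add: power2_eq_square algebra_simps)
  have h3: "8/3 * (ln 2 + s\<^sup>2) = 8/3 * ln 2 + 8/3 * s\<^sup>2" by (simp add: algebra_simps)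
  show ?thesis unfolding h2 h3 using h0 h1 assms by linarith
qed

theorem theoremA4:
  fixes \<sigma> K \<delta> :: real
    and M :: "(real^'d) measure"
    and phi_r :: "real^'d \<Rightarrow> real^'r"
    and L :: "real^'r^'r"
    and N k :: nat
  defines "phiL \<equiv> (\<lambda>x. transpose L *v phi_r x)"
  defines "SigmaX \<equiv> integral\<^sup>L M (\<lambda>x. outer (phiL x))"
  defines "\<Omega> \<equiv> PiM {..<N} (\<lambda>_. M) \<Otimes>\<^sub>M measure_pmf (pmf_of_set (inj_samples N k))"
  assumes "\<sigma> > 0"
    and "prob_space M" and "sets M = sets borel"
    and "phi_r \<in> borel_measurable borel"
    and "\<forall>x. norm (phiL x) \<le> K"
    and "lambda_min SigmaX > 0"
    and "\<delta> > 0"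
    and "k \<le> N"
    and "real k \<ge> 8/3 * ln (4 * real CARD('r) / \<delta>) * (4 * K\<^sup>2 / lambda_min SigmaX)\<^sup>2"
  shows "\<exists>E \<in> sets \<Omega>. measure \<Omega> E \<ge> 1 - \<delta> \<and>
    (\<forall>(xs, s) \<in> E. \<forall>(N'::nat) (xt :: nat \<Rightarrow> real^'d).
      let SigN = (1 / real N) *\<^sub>R (\<Sum>i<N. outer (phiL (xs i)));
          Sigk = (1 / real k) *\<^sub>R (\<Sum>i<k. outer (phiL (xs (s i))));
          SB = S_mat phiL ((real N / \<sigma>\<^sup>2) *\<^sub>R SigN + mat 1) xt;
          SBk = S_mat phiL ((real N / \<sigma>\<^sup>2) *\<^sub>R Sigk + mat 1) xt
      in spec_norm N' (\<lambda>i j. SBk i j - SB i j)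
         \<le> real N' * (4 * K ^ 4 / (\<sigma> / real N + lambda_min SigmaX / (2 * \<sigma>))\<^sup>2)
             * (1 / real N) * sqrt (8 / (3 * real k) * ln (4 * real CARD('r) / \<delta>)))"
proof -
  note phiL_def = assms(1) and SigmaX_def = assms(2) and Omega_def = assms(3)
  have sig: "\<sigma> > 0" and Mp: "prob_space M" and setsM: "sets M = sets borel"
    and phim: "phi_r \<in> borel_measurable borel" and Kb: "\<And>x. norm (phiL x) \<le> K"
    and lamp: "lambda_min SigmaX > 0" and dp: "\<delta> > 0" and kN: "k \<le> N"
    and kb: "real k \<ge> 8/3 * ln (4 * real CARD('r) / \<delta>) * (4 * K\<^sup>2 / lambda_min SigmaX)\<^sup>2"
    using assms(4-12) by auto
  interpret Mp: prob_space M by (rule Mp)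
  have spM: "space M = UNIV" using sets_eq_imp_space_eq[OF setsM] by simp
  have phiL_m[measurable]: "phiL \<in> borel_measurable M"
  proof -
    have "phi_r \<in> borel_measurable M" using phim measurable_cong_sets[OF setsM refl, of borel] by blast
    moreover have "(\<lambda>v. transpose L *v v) \<in> borel_measurable borel"
      by (rule borel_measurable_continuous_onI[OF matrix_vector_mult_linear_continuous_on])
    ultimately show ?thesis unfolding phiL_def by (rule measurable_compose)
  qed
  have om[measurable]: "(\<lambda>x. outer (phiL x)) \<in> borel_measurable M"
    by (rule measurable_compose[OF phiL_m borel_measurable_continuous_onI[OF cont_outer]])
  have K0: "K \<ge> 0" using Kb norm_ge_zero order_trans by blast
  have ob: "norm (outer (phiL x)) \<le> K\<^sup>2" for x
    unfolding norm_outer using Kb[of x] by (simp add: power_mono)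
  have oint: "integrable M (\<lambda>x. outer (phiL x))"
    by (rule Mp.integrable_const_bound[where B="K\<^sup>2"]) (use ob in auto)
  have nS: "norm SigmaX \<le> K\<^sup>2"
  proof -
    have "norm SigmaX \<le> (\<integral>x. norm (outer (phiL x)) \<partial>M)" unfolding SigmaX_def by (rule integral_norm_bound)
    also have "\<dots> \<le> (\<integral>x. K\<^sup>2 \<partial>M)" using oint ob by (intro integral_mono) auto
    finally show ?thesis by (simp add: Mp.prob_space)
  qed
  have ent: "SigmaX $ i $ j = (\<integral>x. outer (phiL x) $ i $ j \<partial>M)" for i j
    unfolding SigmaX_def using integral_bounded_linear[OF bl_entry oint] by simp
  have sym: "transpose SigmaX = SigmaX"
    by (simp add: vec_eq_iff transpose_def ent outer_def mult.commute)
  define Y where "Y x = outer (phiL x) - SigmaX" for x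
  have Ym[measurable]: "Y \<in> borel_measurable M" unfolding Y_def by measurable
  have Yb: "norm (Y x) \<le> 2 * K\<^sup>2" for x
    unfolding Y_def using norm_triangle_ineq4[of "outer (phiL x)" SigmaX] ob[of x] nS by linarith
  have Yd: "norm (Y x - Y y) \<le> sqrt 2 * K\<^sup>2" for x y
    unfolding Y_def using norm_outer_diff[OF Kb Kb, of x y] by simp
  have Y0: "integral\<^sup>L M Y = 0"
    unfolding Y_def using oint by (simp add: Bochner_Integration.integral_diff Mp.prob_space SigmaX_def)
  define lam where "lam = lambda_min SigmaX"
  have lam: "lam > 0" using lamp by (simp add: lam_def)
  have lamK: "lam \<le> K\<^sup>2"
  proof -
    define v :: "real^'r" where "v = axis undefined 1"
    have nv: "norm v = 1" by (simp add: v_def)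
    have "lam * (norm v)\<^sup>2 \<le> v \<bullet> (SigmaX *v v)" unfolding lam_def by (rule lambda_min_quad[OF sym])
    also have "\<dots> \<le> norm SigmaX * (norm v)\<^sup>2" using quad_le[of v SigmaX] by simp
    finally show ?thesis using nS nv by simp
  qed
  have Kp: "K > 0" using lam lamK K0 by (cases "K = 0") auto
  show ?thesis
  proof (cases "\<delta> < 1")
    case False
    then show ?thesis by (intro bexI[of _ "{}"]) auto
  next
    case True
    define r where "r = real CARD('r)"
    define Lg where "Lg = ln (4 * r / \<delta>)"
    define ell where "ell = ln (2 / \<delta>)"
    have r1: "r \<ge> 1" by (simp add: r_def)
    have ell0: "ell > 0" using True dp by (simp add: ell_def)
    have Lg_ge: "Lg \<ge> ln 2 + ell"
    proof -
      have "ln 2 + ell = ln (4 / \<delta>)" using dp ln_mult[of 2 "2/\<delta>"] by (simp add: ell_def)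
      also have "\<dots> \<le> Lg" unfolding Lg_def using dp r1 by (subst ln_le_cancel_iff) (auto simp: divide_right_mono)
      finally show ?thesis .
    qed
    have ln2: "ln (2::real) \<ge> 2/3" by (rule ln2_ge_two_thirds)
    have Lgp: "Lg > 0" using Lg_ge ell0 ln2 by linarith
    have kb': "real k \<ge> 8/3 * Lg * (4 * K\<^sup>2 / lam)\<^sup>2" using kb by (simp add: Lg_def r_def lam_def)
    have kp: "k > 0"
    proof -
      have "0 < 8/3 * Lg * (4 * K\<^sup>2 / lam)\<^sup>2" using Lgp Kp lam by simp
      then show ?thesis using kb' by linarith
    qed
    have Np: "N > 0" using kp kN by simp
    define t where "t = 2 * K\<^sup>2 * sqrt (8 / (3 * real k) * Lg)"
    have tl: "t \<le> lam / 2"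
    proof -
      have "8 / (3 * real k) * Lg \<le> (lam / (4 * K\<^sup>2))\<^sup>2"
      proof -
        define q where "q = (4 * K\<^sup>2 / lam)\<^sup>2"
        have q: "q > 0" using Kp lam by (simp add: q_def)
        have qi: "(lam / (4 * K\<^sup>2))\<^sup>2 = 1 / q" by (simp add: q_def power_divide)
        define A where "A = 8/3 * Lg"
        have "A * q \<le> real k" using kb' by (simp add: A_def q_def)
        then have "A / real k \<le> 1 / q" using q kp by (simp add: field_simps)
        moreover have "8 / (3 * real k) * Lg = A / real k" by (simp add: A_def)
        ultimately show ?thesis using qi by simp
      qed
      then have "sqrt (8 / (3 * real k) * Lg) \<le> sqrt ((lam / (4 * K\<^sup>2))\<^sup>2)" by (rule real_sqrt_le_mono)
      also have "\<dots> = lam / (4 * K\<^sup>2)" using lam Kp by simp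
      finally have "sqrt (8 / (3 * real k) * Lg) \<le> lam / (4 * K\<^sup>2)" .
      then have "2 * K\<^sup>2 * sqrt (8 / (3 * real k) * Lg) \<le> 2 * K\<^sup>2 * (lam / (4 * K\<^sup>2))"
        using Kp by (intro mult_left_mono) auto
      then show ?thesis using Kp by (simp add: t_def)
    qed
    have thr: "2 * K\<^sup>2 / sqrt m + sqrt 2 * K\<^sup>2 * sqrt (2 * ln (1 / (\<delta> / 2)) / m) \<le> t"
      if m: "m \<ge> real k" for m :: real
    proof -
      have mp: "m > 0" using m kp by linarith
      define sq where "sq = sqrt ell"
      have sq0: "sq \<ge> 0" using ell0 by (simp add: sq_def)
      have sq2: "sq\<^sup>2 = ell" using ell0 by (simp add: sq_def less_imp_le)
      have e0: "ln (1 / (\<delta> / 2)) = ell" by (simp add: ell_def)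
      have "sqrt 2 * K\<^sup>2 * sqrt (2 * ln (1 / (\<delta> / 2)) / m) = sqrt 2 * K\<^sup>2 * (sqrt 2 * sq / sqrt m)"
        unfolding e0 by (simp add: sq_def real_sqrt_mult real_sqrt_divide)
      also have "\<dots> = (sqrt 2 * sqrt 2) * K\<^sup>2 * sq / sqrt m" by simp
      also have "sqrt 2 * sqrt 2 = (2::real)" by simp
      finally have e1: "sqrt 2 * K\<^sup>2 * sqrt (2 * ln (1 / (\<delta> / 2)) / m) = 2 * K\<^sup>2 * sq / sqrt m" .
      have "2 * K\<^sup>2 / sqrt m + sqrt 2 * K\<^sup>2 * sqrt (2 * ln (1 / (\<delta> / 2)) / m) = 2 * K\<^sup>2 * (1 + sq) / sqrt m"
        unfolding e1 by (simp add: add_divide_distrib algebra_simps)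
      also have "\<dots> \<le> 2 * K\<^sup>2 * (1 + sq) / sqrt (real k)"
        using m kp Kp sq0 by (intro divide_left_mono mult_pos_pos) auto
      also have "1 + sq \<le> sqrt (8/3 * Lg)"
      proof -
        have "(1 + sq)\<^sup>2 \<le> 8/3 * (ln 2 + sq\<^sup>2)" by (rule key_ineq[OF ln2])
        also have "\<dots> \<le> 8/3 * Lg" using Lg_ge sq2 by simp
        finally show ?thesis using sq0 by (intro real_le_rsqrt) auto
      qed
      then have "2 * K\<^sup>2 * (1 + sq) / sqrt (real k) \<le> 2 * K\<^sup>2 * sqrt (8/3 * Lg) / sqrt (real k)"
        using Kp kp by (intro divide_right_mono mult_left_mono) auto
      also have "\<dots> = t"
      proof -
        have "8 / (3 * real k) * Lg = (8/3 * Lg) / real k" by simp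
        then have "sqrt (8 / (3 * real k) * Lg) = sqrt (8/3 * Lg) / sqrt (real k)" by (simp only: real_sqrt_divide)
        then show ?thesis by (simp add: t_def)
      qed
      finally show ?thesis .
    qed
    let ?P = "PiM {..<N} (\<lambda>_. M)"
    let ?S = "inj_samples N k"
    interpret P: prob_space ?P by (rule prob_space_PiM) (use Mp in auto)
    have Sfin: "finite ?S" unfolding inj_samples_def
      by (rule finite_subset[OF _ finite_PiE[of "{..<k}" "\<lambda>_. {..<N}"]]) auto
    have Sne: "?S \<noteq> {}"
    proof -
      have "restrict (\<lambda>i. i) {..<k} \<in> ?S" using kN by (auto simp: inj_samples_def inj_on_def)
      then show ?thesis by blast
    qed
    define dev where "dev I xs = norm ((1 / real (card I)) *\<^sub>R (\<Sum>i\<in>I. Y (xs i)))" for I :: "nat set" and xs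
    have badI: "emeasure ?P {xs \<in> space ?P. dev I xs > t} \<le> ennreal (\<delta> / 2)"
      if I: "I \<subseteq> {..<N}" "I \<noteq> {}" "card I \<ge> k" for I
    proof -
      have fI: "finite I" using I finite_subset by blast
      show ?thesis unfolding dev_def
      proof (rule bad_event[OF Mp _ I(1,2) Ym])
        show "2 * K\<^sup>2 / sqrt (real (card I)) + sqrt 2 * K\<^sup>2 * sqrt (2 * ln (1 / (\<delta> / 2)) / real (card I)) \<le> t"
          using I(3) by (intro thr) simp
      qed (use Yb Yd Kp Y0 dp True in auto)
    qed
    define G where "G = {xs \<in> space ?P. dev {..<N} xs \<le> t}"
    define Gs where "Gs s = {xs \<in> space ?P. dev (s ` {..<k}) xs \<le> t}" for s :: "nat \<Rightarrow> nat"
    have devm: "dev I \<in> borel_measurable ?P" if I: "I \<subseteq> {..<N}" for I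
    proof -
      have sm[measurable]: "(\<lambda>xs. \<Sum>i\<in>I. Y (xs i)) \<in> borel_measurable ?P"
      proof (rule borel_measurable_sum)
        fix i assume "i \<in> I"
        then have "i \<in> {..<N}" using I by blast
        then show "(\<lambda>x. Y (x i)) \<in> borel_measurable ?P"
          by (rule measurable_compose[OF measurable_component_singleton[where M="\<lambda>_. M"] Ym])
      qed
      show ?thesis unfolding dev_def by measurable
    qed
    have sS: "s ` {..<k} \<subseteq> {..<N}" "inj_on s {..<k}" if "s \<in> ?S" for s
      using that by (auto simp: inj_samples_def PiE_def Pi_def)
    have Gm: "G \<in> sets ?P" unfolding G_def using devm[of "{..<N}"] by measurable
    have Gsm: "Gs s \<in> sets ?P" if "s \<in> ?S" for s unfolding Gs_def using devm[OF sS(1)[OF that]] by measurable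
    have Gprob: "measure ?P (G \<inter> Gs s) \<ge> 1 - \<delta>" if s: "s \<in> ?S" for s
    proof -
      have cI: "card (s ` {..<k}) = k" using sS(2)[OF s] by (simp add: card_image)
      have b1: "measure ?P {xs \<in> space ?P. dev {..<N} xs > t} \<le> \<delta> / 2"
        using badI[of "{..<N}"] Np kN dp by (simp add: P.emeasure_eq_measure lessThan_empty_iff)
      have b2: "measure ?P {xs \<in> space ?P. dev (s ` {..<k}) xs > t} \<le> \<delta> / 2"
        using badI[of "s ` {..<k}"] sS(1)[OF s] cI kp dp by (simp add: P.emeasure_eq_measure lessThan_empty_iff)
      note [measurable] = devm[of "{..<N}", simplified] devm[OF sS(1)[OF s]]
      have "space ?P - (G \<inter> Gs s) \<subseteq> {xs \<in> space ?P. dev {..<N} xs > t} \<union> {xs \<in> space ?P. dev (s ` {..<k}) xs > t}"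
        by (auto simp: G_def Gs_def)
      then have "measure ?P (space ?P - (G \<inter> Gs s)) \<le> measure ?P ({xs \<in> space ?P. dev {..<N} xs > t} \<union> {xs \<in> space ?P. dev (s ` {..<k}) xs > t})"
        by (intro P.finite_measure_mono) auto
      also have "\<dots> \<le> measure ?P {xs \<in> space ?P. dev {..<N} xs > t} + measure ?P {xs \<in> space ?P. dev (s ` {..<k}) xs > t}"
        by (intro measure_Un_le) auto
      finally have "measure ?P (space ?P - (G \<inter> Gs s)) \<le> \<delta>" using b1 b2 by linarith
      moreover have "measure ?P (space ?P - (G \<inter> Gs s)) = 1 - measure ?P (G \<inter> Gs s)"
        using Gm Gsm[OF s] by (intro P.prob_compl) auto
      ultimately show ?thesis by linarith
    qed
    define E where "E = (\<Union>s\<in>?S. (G \<inter> Gs s) \<times> {s})"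
    have Om: "\<Omega> = ?P \<Otimes>\<^sub>M measure_pmf (pmf_of_set ?S)" by (simp add: Omega_def)
    interpret O: prob_space \<Omega> unfolding Om by (intro prob_space_pair P.prob_space_axioms prob_space_measure_pmf)
    have Esets: "(G \<inter> Gs s) \<times> {s} \<in> sets \<Omega>" if "s \<in> ?S" for s
      unfolding Om by (intro pair_measureI) (use Gm Gsm[OF that] in auto)
    have EE: "E \<in> sets \<Omega>" unfolding E_def using Sfin Esets by auto
    have meas_s: "measure \<Omega> ((G \<inter> Gs s) \<times> {s}) = measure ?P (G \<inter> Gs s) / real (card ?S)" if s: "s \<in> ?S" for s
    proof -
      have "emeasure \<Omega> ((G \<inter> Gs s) \<times> {s}) = emeasure ?P (G \<inter> Gs s) * emeasure (measure_pmf (pmf_of_set ?S)) {s}"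
        unfolding Om using Gm Gsm[OF s] by (intro measure_pmf.emeasure_pair_measure_Times) auto
      also have "\<dots> = ennreal (measure ?P (G \<inter> Gs s) * (1 / real (card ?S)))"
        using s Sfin Sne by (simp add: P.emeasure_eq_measure measure_pmf.emeasure_eq_measure measure_pmf_single) (simp add: ennreal_mult'[symmetric] divide_ennreal)
      finally show ?thesis by (simp add: O.emeasure_eq_measure)
    qed
    have "measure \<Omega> E = (\<Sum>s\<in>?S. measure \<Omega> ((G \<inter> Gs s) \<times> {s}))"
      unfolding E_def using Sfin Esets by (intro O.finite_measure_finite_Union) (auto simp: disjoint_family_on_def)
    also have "\<dots> = (\<Sum>s\<in>?S. measure ?P (G \<inter> Gs s) / real (card ?S))" by (intro sum.cong refl meas_s)
    also have "\<dots> \<ge> (\<Sum>s\<in>?S. (1 - \<delta>) / real (card ?S))"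
      using Gprob by (intro sum_mono divide_right_mono) auto
    also have "(\<Sum>s\<in>?S. (1 - \<delta>) / real (card ?S)) = 1 - \<delta>" using Sfin Sne by simp
    finally have Eprob: "measure \<Omega> E \<ge> 1 - \<delta>" .
    have fin: "spec_norm N' (\<lambda>i j. S_mat phiL ((real N / \<sigma>\<^sup>2) *\<^sub>R ((1 / real k) *\<^sub>R (\<Sum>i<k. outer (phiL (xs (s i))))) + mat 1) xt i j
                 - S_mat phiL ((real N / \<sigma>\<^sup>2) *\<^sub>R ((1 / real N) *\<^sub>R (\<Sum>i<N. outer (phiL (xs i)))) + mat 1) xt i j)
         \<le> real N' * (4 * K ^ 4 / (\<sigma> / real N + lambda_min SigmaX / (2 * \<sigma>))\<^sup>2)
             * (1 / real N) * sqrt (8 / (3 * real k) * ln (4 * real CARD('r) / \<delta>))"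
      if xsE: "(xs, s) \<in> E" for xs s N' xt
    proof -
      have s: "s \<in> ?S" and xG: "xs \<in> G" and xGs: "xs \<in> Gs s" using xsE by (auto simp: E_def)
      have eN: "(1 / real N) *\<^sub>R (\<Sum>i<N. outer (phiL (xs i))) - SigmaX = (1 / real N) *\<^sub>R (\<Sum>i<N. Y (xs i))"
      proof -
        have "(\<Sum>i<N. Y (xs i)) = (\<Sum>i<N. outer (phiL (xs i))) - real N *\<^sub>R SigmaX"
          by (simp add: Y_def sum_subtractf sum_constant_scaleR del: sum_constant)
        then show ?thesis using Np by (simp add: scaleR_diff_right)
      qed
      have hN: "norm ((1 / real N) *\<^sub>R (\<Sum>i<N. outer (phiL (xs i))) - SigmaX) \<le> t"
        using xG by (simp add: G_def dev_def eN)
      have ek: "(1 / real k) *\<^sub>R (\<Sum>i<k. outer (phiL (xs (s i)))) - SigmaX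
              = (1 / real (card (s ` {..<k}))) *\<^sub>R (\<Sum>j\<in>s ` {..<k}. Y (xs j))"
      proof -
        have cI: "card (s ` {..<k}) = k" using sS(2)[OF s] by (simp add: card_image)
        have "(\<Sum>j\<in>s ` {..<k}. Y (xs j)) = (\<Sum>i<k. Y (xs (s i)))"
          using sS(2)[OF s] by (simp add: sum.reindex)
        also have "\<dots> = (\<Sum>i<k. outer (phiL (xs (s i)))) - real k *\<^sub>R SigmaX"
          by (simp add: Y_def sum_subtractf sum_constant_scaleR del: sum_constant)
        finally show ?thesis using kp cI by (simp add: scaleR_diff_right)
      qed
      have hk: "norm ((1 / real k) *\<^sub>R (\<Sum>i<k. outer (phiL (xs (s i)))) - SigmaX) \<le> t"
        using xGs by (simp add: Gs_def dev_def ek)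
      have a0: "real N / \<sigma>\<^sup>2 \<ge> 0" by simp
      have dm: "spec_norm N' (\<lambda>i j. phiL (xt i) \<bullet> (matrix_inv ((real N / \<sigma>\<^sup>2) *\<^sub>R ((1 / real k) *\<^sub>R (\<Sum>i<k. outer (phiL (xs (s i))))) + mat 1) *v phiL (xt j))
            - phiL (xt i) \<bullet> (matrix_inv ((real N / \<sigma>\<^sup>2) *\<^sub>R ((1 / real N) *\<^sub>R (\<Sum>i<N. outer (phiL (xs i)))) + mat 1) *v phiL (xt j)))
         \<le> real N' * K\<^sup>2 * ((real N / \<sigma>\<^sup>2) * (2 * t) / (1 + (real N / \<sigma>\<^sup>2) * (lambda_min SigmaX / 2))\<^sup>2)"
        by (rule det_main[OF sym a0 lamp hN hk]) (use tl Kb in \<open>auto simp: lam_def\<close>)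
      define D where "D = \<sigma> / real N + lambda_min SigmaX / (2 * \<sigma>)"
      have Dp: "D > 0" using sig Np lamp by (simp add: D_def add_pos_pos)
      have e1: "1 + (real N / \<sigma>\<^sup>2) * (lambda_min SigmaX / 2) = (real N / \<sigma>) * D"
        using sig Np by (simp add: D_def field_simps power2_eq_square)
      define X where "X = sqrt (8 / (3 * real k) * ln (4 * real CARD('r) / \<delta>))"
      have tX: "t = 2 * K\<^sup>2 * X" by (simp add: t_def X_def Lg_def r_def)
      have "real N' * K\<^sup>2 * ((real N / \<sigma>\<^sup>2) * (2 * t) / (1 + (real N / \<sigma>\<^sup>2) * (lambda_min SigmaX / 2))\<^sup>2)
          = real N' * (4 * K ^ 4 / D\<^sup>2) * (1 / real N) * X"
        unfolding e1 tX using sig Np Dp by (simp add: field_simps power2_eq_square) (simp add: power4_eq_xxxx)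
      then show ?thesis using dm by (simp add: S_mat_def D_def X_def)
    qed
    show ?thesis
    proof (intro bexI[of _ E] conjI)
      show "E \<in> sets \<Omega>" by (rule EE)
      show "measure \<Omega> E \<ge> 1 - \<delta>" by (rule Eprob)
      show "\<forall>(xs, s)\<in>E. \<forall>(N'::nat) (xt :: nat \<Rightarrow> real^'d).
      let SigN = (1 / real N) *\<^sub>R (\<Sum>i<N. outer (phiL (xs i)));
          Sigk = (1 / real k) *\<^sub>R (\<Sum>i<k. outer (phiL (xs (s i))));
          SB = S_mat phiL ((real N / \<sigma>\<^sup>2) *\<^sub>R SigN + mat 1) xt;
          SBk = S_mat phiL ((real N / \<sigma>\<^sup>2) *\<^sub>R Sigk + mat 1) xt
      in spec_norm N' (\<lambda>i j. SBk i j - SB i j)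
         \<le> real N' * (4 * K ^ 4 / (\<sigma> / real N + lambda_min SigmaX / (2 * \<sigma>))\<^sup>2)
             * (1 / real N) * sqrt (8 / (3 * real k) * ln (4 * real CARD('r) / \<delta>))"
        using fin by (auto simp: Let_def)
    qed
  qed
qed

end
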